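(* Let $q$ be a prime power and let $\xi$ be a generator of the multiplicative group $\mathbb{F}_q^{*}$. Let $0\le i_1,i_2\le q-2$ be integers such that $i_1=i_2 s$ for some non-negative integer $s$. Let $n$ be a positive integer with $\gcd(n,q)=1$, and let $m=\gcd(n,q-1)$. If $m \mid \gcd(i_2(s-1),\,q-1)$, then the families of $\xi^{i_1}$-constacyclic and $\xi^{i_2}$-constacyclic codes of length $n$ over $\mathbb{F}_q$ are monomially equivalent.
   Context: For $a\in\mathbb{F}_q^*$, a linear code $C\subseteq\mathbb{F}_q^n$ is called $a$-constacyclic if for every codeword $(c_0,c_1,\ldots,c_{n-1})\in C$ we also have $(a c_{n-1},c_0,\ldots,c_{n-2})\in C$; equivalently, $a$-constacyclic codes of length $n$ correspond to ideals of $\mathbb{F}_q[x]/\langle x^n-a\rangle$. An isometry of linear codes is an $\mathbb{F}_q$-linear isomorphism preserving Hamming distance (equivalently, a map given by a monomial matrix). For $a,b\in\mathbb{F}_q^*$, the families of $a$-constacyclic and $b$-constacyclic codes of length $n$ over $\mathbb{F}_q$ are called monomially equivalent if there is a one-to-one correspondence between the set of $a$-constacyclic codes and the set of $b$-constacyclic codes of length $n$ given by an isometry of linear codes (i.e., a single Hamming-distance-preserving $\mathbb{F}_q$-linear isomorphism $\mathbb{F}_q^n\to\mathbb{F}_q^n$ mapping each $a$-constacyclic code onto a $b$-constacyclic code and inducing a bijection between the two families). *)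

theory Defs
  imports Main
begin

text \<open>Words of length n over a field are modelled as functions nat => 'a vanishing
  outside {0..<n}.\<close>

definition words :: "nat \<Rightarrow> (nat \<Rightarrow> 'a::zero) set" where
  "words n = {c. \<forall>i\<ge>n. c i = 0}"

definition hamming_dist :: "nat \<Rightarrow> (nat \<Rightarrow> 'a) \<Rightarrow> (nat \<Rightarrow> 'a) \<Rightarrow> nat" where
  "hamming_dist n x y = card {i. i < n \<and> x i \<noteq> y i}"

definition linear_code :: "nat \<Rightarrow> (nat \<Rightarrow> 'a::field) set \<Rightarrow> bool" where
  "linear_code n C \<longleftrightarrow> C \<subseteq> words n \<and> (\<lambda>i. 0) \<in> C
     \<and> (\<forall>x\<in>C. \<forall>y\<in>C. (\<lambda>i. x i + y i) \<in> C)
     \<and> (\<forall>a. \<forall>x\<in>C. (\<lambda>i. a * x i) \<in> C)"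

definition consta_shift :: "nat \<Rightarrow> 'a::field \<Rightarrow> (nat \<Rightarrow> 'a) \<Rightarrow> (nat \<Rightarrow> 'a)" where
  "consta_shift n a c = (\<lambda>i. if i = 0 then a * c (n - 1) else if i < n then c (i - 1) else 0)"

definition constacyclic :: "nat \<Rightarrow> 'a::field \<Rightarrow> (nat \<Rightarrow> 'a) set \<Rightarrow> bool" where
  "constacyclic n a C \<longleftrightarrow> linear_code n C \<and> (\<forall>c\<in>C. consta_shift n a c \<in> C)"

definition isometry :: "nat \<Rightarrow> ((nat \<Rightarrow> 'a::field) \<Rightarrow> (nat \<Rightarrow> 'a)) \<Rightarrow> bool" where
  "isometry n f \<longleftrightarrow> bij_betw f (words n) (words n)
     \<and> (\<forall>x\<in>words n. \<forall>y\<in>words n. f (\<lambda>i. x i + y i) = (\<lambda>i. f x i + f y i))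
     \<and> (\<forall>a. \<forall>x\<in>words n. f (\<lambda>i. a * x i) = (\<lambda>i. a * f x i))
     \<and> (\<forall>x\<in>words n. \<forall>y\<in>words n. hamming_dist n (f x) (f y) = hamming_dist n x y)"

definition monomially_equivalent :: "nat \<Rightarrow> 'a::field \<Rightarrow> 'a \<Rightarrow> bool" where
  "monomially_equivalent n a b \<longleftrightarrow> (\<exists>f. isometry n f \<and>
     bij_betw (\<lambda>C. f ` C) {C. constacyclic n a C} {C. constacyclic n b C})"

end

theory Submission
  imports Defs
begin

lemma fin_pow:
  fixes x :: "'a::{finite,field}"
  assumes "x \<noteq> 0"
  shows "x ^ (card (UNIV :: 'a set) - 1) = 1"
proof -
  let ?S = "UNIV - {0::'a}"
  have inj: "inj_on ((*) x) ?S" using assms by (auto simp: inj_on_def)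
  have img: "(*) x ` ?S = ?S"
  proof
    show "(*) x ` ?S \<subseteq> ?S" using assms by auto
    show "?S \<subseteq> (*) x ` ?S"
    proof
      fix y assume "y \<in> ?S"
      then have "y = x * (inverse x * y)" "inverse x * y \<in> ?S" using assms by auto
      then show "y \<in> (*) x ` ?S" by blast
    qed
  qed
  have "prod id ?S = prod id ((*) x ` ?S)" using img by simp
  also have "\<dots> = prod (\<lambda>y. x * y) ?S" using prod.reindex[OF inj, of id] by simp
  also have "\<dots> = x ^ card ?S * prod id ?S" by (simp add: prod.distrib)
  finally have e: "prod id ?S = x ^ card ?S * prod id ?S" .
  have "prod id ?S \<noteq> 0" by (simp add: prod_zero_iff)
  then have "x ^ card ?S = 1" using e by simp
  moreover have "card ?S = card (UNIV :: 'a set) - 1" by (simp add: card_Diff_singleton)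
  ultimately show ?thesis by simp
qed

lemma pow_mod:
  fixes x :: "'a::{finite,field}"
  assumes "x \<noteq> 0"
  shows "x ^ j = x ^ (j mod (card (UNIV :: 'a set) - 1))"
proof -
  let ?d = "card (UNIV :: 'a set) - 1"
  have "x ^ j = x ^ (?d * (j div ?d) + j mod ?d)" by (metis div_mult_mod_eq mult.commute)
  also have "\<dots> = (x ^ ?d) ^ (j div ?d) * x ^ (j mod ?d)" by (simp only: power_add power_mult)
  finally show ?thesis using fin_pow[OF assms] by simp
qed

definition scl :: "'a::field \<Rightarrow> (nat \<Rightarrow> 'a) \<Rightarrow> (nat \<Rightarrow> 'a)" where
  "scl \<mu> c = (\<lambda>i. \<mu> ^ i * c i)"

lemma scl_inv: "(\<mu>::'a::field) \<noteq> 0 \<Longrightarrow> scl (inverse \<mu>) (scl \<mu> c) = c"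
  by (auto simp: scl_def fun_eq_iff power_inverse field_simps)

lemma scl_words: "c \<in> words n \<Longrightarrow> scl \<mu> c \<in> words n"
  by (simp add: words_def scl_def)

lemma scl_add: "scl \<mu> (\<lambda>i. x i + y i) = (\<lambda>i. scl \<mu> x i + scl \<mu> y i)"
  by (simp add: scl_def fun_eq_iff algebra_simps)

lemma scl_smult: "scl \<mu> (\<lambda>i. a * x i) = (\<lambda>i. a * scl \<mu> x i)"
  by (simp add: scl_def fun_eq_iff algebra_simps)

lemma scl_isometry:
  assumes "(\<mu>::'a::field) \<noteq> 0"
  shows "isometry n (scl \<mu>)"
proof -
  have bij: "bij_betw (scl \<mu>) (words n) (words n)"
  proof (rule bij_betw_byWitness[where f' = "scl (inverse \<mu>)"])
    show "\<forall>a\<in>words n. scl (inverse \<mu>) (scl \<mu> a) = a" using scl_inv[OF assms] by blast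
    have "inverse \<mu> \<noteq> 0" using assms by simp
    show "\<forall>a\<in>words n. scl \<mu> (scl (inverse \<mu>) a) = a"
      using scl_inv[OF \<open>inverse \<mu> \<noteq> 0\<close>] assms by simp
    show "scl \<mu> ` words n \<subseteq> words n" using scl_words by blast
    show "scl (inverse \<mu>) ` words n \<subseteq> words n" using scl_words by blast
  qed
  have "hamming_dist n (scl \<mu> x) (scl \<mu> y) = hamming_dist n x y" for x y
    using assms by (simp add: hamming_dist_def scl_def)
  then show ?thesis using bij by (simp add: isometry_def scl_add scl_smult)
qed

lemma scl_consta:
  assumes mu: "(\<mu>::'a::field) \<noteq> 0" and ab: "\<mu> ^ n * b = a" and n: "n > 0"
    and C: "constacyclic n a C"
  shows "constacyclic n b (scl \<mu> ` C)"
proof -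
  have lc: "linear_code n C" and sh: "\<forall>c\<in>C. consta_shift n a c \<in> C"
    using C by (auto simp: constacyclic_def)
  have lc2: "linear_code n (scl \<mu> ` C)"
  proof -
    have "scl \<mu> ` C \<subseteq> words n" using lc scl_words by (auto simp: linear_code_def)
    moreover have "(\<lambda>i. 0) \<in> scl \<mu> ` C"
    proof -
      have "scl \<mu> (\<lambda>i. 0) = (\<lambda>i. 0)" by (simp add: scl_def)
      then show ?thesis using lc by (metis image_eqI linear_code_def)
    qed
    moreover have "\<forall>x\<in>scl \<mu> ` C. \<forall>y\<in>scl \<mu> ` C. (\<lambda>i. x i + y i) \<in> scl \<mu> ` C"
      using lc by (auto simp: linear_code_def scl_add[symmetric])
    moreover have "\<forall>a. \<forall>x\<in>scl \<mu> ` C. (\<lambda>i. a * x i) \<in> scl \<mu> ` C"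
      using lc by (auto simp: linear_code_def scl_smult[symmetric])
    ultimately show ?thesis by (simp add: linear_code_def)
  qed
  have "consta_shift n b (scl \<mu> c) \<in> scl \<mu> ` C" if "c \<in> C" for c
  proof -
    have eq: "consta_shift n b (scl \<mu> c) = scl \<mu> (\<lambda>i. inverse \<mu> * consta_shift n a c i)"
    proof
      fix i
      show "consta_shift n b (scl \<mu> c) i = scl \<mu> (\<lambda>i. inverse \<mu> * consta_shift n a c i) i"
      proof (cases "i = 0")
        case True
        have "\<mu> ^ n = \<mu> * \<mu> ^ (n - 1)" using n by (metis Suc_diff_1 power_Suc)
        then show ?thesis using True mu ab[symmetric] by (simp add: consta_shift_def scl_def field_simps)
      next
        case False
        then have "\<mu> ^ i = \<mu> * \<mu> ^ (i - 1)" by (metis Suc_diff_1 gr0I power_Suc)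
        then show ?thesis using False mu by (simp add: consta_shift_def scl_def field_simps)
      qed
    qed
    have "(\<lambda>i. inverse \<mu> * consta_shift n a c i) \<in> C"
      using lc sh that by (simp add: linear_code_def)
    then show ?thesis using eq by simp
  qed
  then show ?thesis using lc2 by (auto simp: constacyclic_def)
qed

lemma equiv_of_root:
  assumes mu: "(\<mu>::'a::field) \<noteq> 0" and ab: "\<mu> ^ n * b = a" and n: "n > 0"
  shows "monomially_equivalent n a b"
proof -
  have mu': "inverse \<mu> \<noteq> 0" using mu by simp
  have ba: "(inverse \<mu>) ^ n * a = b" using ab mu by (auto simp: power_inverse field_simps)
  have inj: "inj (scl \<mu>)" by (metis injI scl_inv[OF mu])
  show ?thesis unfolding monomially_equivalent_def
  proof (intro exI conjI)
    show "isometry n (scl \<mu>)" by (rule scl_isometry[OF mu])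
    show "bij_betw ((`) (scl \<mu>)) {C. constacyclic n a C} {C. constacyclic n b C}"
    proof (rule bij_betw_byWitness[where f' = "(`) (scl (inverse \<mu>))"])
      show "\<forall>C\<in>{C. constacyclic n a C}. scl (inverse \<mu>) ` scl \<mu> ` C = C"
        using scl_inv[OF mu] by (simp add: image_image)
      show "\<forall>C\<in>{C. constacyclic n b C}. scl \<mu> ` scl (inverse \<mu>) ` C = C"
        using scl_inv[OF mu'] mu by (simp add: image_image)
      show "(`) (scl \<mu>) ` {C. constacyclic n a C} \<subseteq> {C. constacyclic n b C}"
        using scl_consta[OF mu ab n] by auto
      show "(`) (scl (inverse \<mu>)) ` {C. constacyclic n b C} \<subseteq> {C. constacyclic n a C}"
        using scl_consta[OF mu' ba n] by auto
    qed
  qed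
qed

theorem theorem3p1:
  fixes \<xi> :: "'a::{finite,field}"
    and i1 i2 s n m :: nat
  assumes gen: "\<forall>x::'a. x \<noteq> 0 \<longrightarrow> (\<exists>k::nat. x = \<xi> ^ k)"
    and i1_le: "i1 \<le> card (UNIV :: 'a set) - 2" and i2_le: "i2 \<le> card (UNIV :: 'a set) - 2"
    and i1_eq: "i1 = i2 * s"
    and n_pos: "n > 0"
    and cop: "gcd n (card (UNIV :: 'a set)) = 1"
    and m_def: "m = gcd n (card (UNIV :: 'a set) - 1)"
    and dvd: "int m dvd gcd (int i2 * (int s - 1)) (int (card (UNIV :: 'a set)) - 1)"
  shows "monomially_equivalent n (\<xi> ^ i1) (\<xi> ^ i2)"
proof (cases "\<xi> = 0")
  case True
  have "card (UNIV :: 'a set) \<le> 2"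
  proof -
    have "(UNIV :: 'a set) \<subseteq> {0, 1}" using gen True by (auto simp: zero_power)
    then have "card (UNIV :: 'a set) \<le> card {0, 1::'a}" by (intro card_mono) auto
    then show ?thesis by simp
  qed
  then have "i1 = 0" "i2 = 0" using i1_le i2_le by auto
  then show ?thesis using equiv_of_root[of 1 n] n_pos by simp
next
  case False
  let ?q = "card (UNIV :: 'a set)"
  let ?d = "?q - 1"
  have q2: "?q \<ge> 2"
  proof -
    have "{0, 1::'a} \<subseteq> UNIV" by simp
    then have "card {0,1::'a} \<le> ?q" by (rule card_mono[OF finite_UNIV])
    then show ?thesis by simp
  qed
  have md: "int m dvd int i2 * (int s - 1)" using dvd by (meson dvd_trans gcd_dvd1)
  then obtain t where t: "int i2 * (int s - 1) = int m * t" by (auto elim: dvdE)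
  have "int m = gcd (int n) (int ?d)" using m_def by simp
  then obtain u v where uv: "u * int n + v * int ?d = int m" by (metis bezout_int)
  define k where "k = nat ((t * u) mod int ?d)"
  have dpos: "int ?d > 0" using q2 by simp
  have kk: "int k = (t * u) mod int ?d" using dpos k_def by simp
  have "int ?d dvd (int i1 - int (n * k + i2))"
  proof -
    have "int i1 - int (n * k + i2) = int i2 * (int s - 1) - int n * int k"
      using i1_eq by (simp add: algebra_simps)
    also have "\<dots> = t * u * int n + t * v * int ?d - int n * int k"
    proof -
      have "int i2 * (int s - 1) = (u * int n + v * int ?d) * t" using t uv by simp
      then show ?thesis by (simp add: algebra_simps)
    qed
    also have "\<dots> = int n * (t * u - (t * u) mod int ?d) + (t * v) * int ?d"
      using kk by (simp add: algebra_simps)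
    also have "\<dots> = int ?d * (int n * ((t * u) div int ?d) + t * v)"
      by (simp add: minus_mod_eq_mult_div algebra_simps)
    finally show ?thesis by simp
  qed
  then have "int i1 mod int ?d = int (n * k + i2) mod int ?d"
    by (simp add: mod_eq_dvd_iff)
  then have mm: "i1 mod ?d = (n * k + i2) mod ?d"
  proof -
    assume h: "int i1 mod int ?d = int (n * k + i2) mod int ?d"
    have "int (i1 mod ?d) = int ((n * k + i2) mod ?d)" unfolding of_nat_mod by (rule h)
    then show ?thesis by (rule of_nat_eq_iff[THEN iffD1])
  qed
  have "(\<xi> ^ k) ^ n * \<xi> ^ i2 = \<xi> ^ (n * k + i2)" by (simp add: power_add power_mult mult.commute)
  also have "\<dots> = \<xi> ^ i1" using pow_mod[OF False, of i1] pow_mod[OF False, of "n * k + i2"] mm by simp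
  finally have "(\<xi> ^ k) ^ n * \<xi> ^ i2 = \<xi> ^ i1" .
  moreover have "\<xi> ^ k \<noteq> 0" using False by simp
  ultimately show ?thesis using equiv_of_root[of "\<xi> ^ k" n "\<xi> ^ i2" "\<xi> ^ i1"] n_pos by blast
qed

end
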